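(* The integrality gap of the following LP relaxation of IIK is unbounded: for every constant $C>0$ there is an instance of IIK for which the optimal value of $$\max \sum_{t=1}^T\sum_{i=1}^N v_i x_{i,t}\quad\text{s.t.}\quad \sum_{i=1}^N w_i x_{i,t}\le B_t\ \forall t,\quad x_{i,t-1}\le x_{i,t}\ \forall i,\ t=2,\dots,T,\quad x_{i,t}=0 \text{ whenever } w_i>B_t,\quad x_{i,t}\in[0,1]\ \forall i,t$$ exceeds $C$ times the optimal value of the IIK instance (i.e. of the same program with $x_{i,t}\in\{0,1\}$). *)

theory Defs
  imports Complex_Main
begin

text \<open>An instance of IIK (incremental knapsack): N items with values v i and weights w i
  (i = 1..N), T time periods with capacities B t (t = 1..T), nondecreasing in t.\<close>

definition iik_instance ::
  "nat \<Rightarrow> nat \<Rightarrow> (nat \<Rightarrow> real) \<Rightarrow> (nat \<Rightarrow> real) \<Rightarrow> (nat \<Rightarrow> real) \<Rightarrow> bool" where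
  "iik_instance N T v w B \<longleftrightarrow>
     (\<forall>i\<in>{1..N}. v i > 0 \<and> w i > 0) \<and>
     (\<forall>t\<in>{1..T}. B t > 0) \<and>
     (\<forall>t\<in>{2..T}. B (t - 1) \<le> B t)"

definition lp_feasible ::
  "nat \<Rightarrow> nat \<Rightarrow> (nat \<Rightarrow> real) \<Rightarrow> (nat \<Rightarrow> real) \<Rightarrow> (nat \<Rightarrow> nat \<Rightarrow> real) \<Rightarrow> bool" where
  "lp_feasible N T w B x \<longleftrightarrow>
     (\<forall>t\<in>{1..T}. (\<Sum>i=1..N. w i * x i t) \<le> B t) \<and>
     (\<forall>i\<in>{1..N}. \<forall>t\<in>{2..T}. x i (t - 1) \<le> x i t) \<and>
     (\<forall>i\<in>{1..N}. \<forall>t\<in>{1..T}. w i > B t \<longrightarrow> x i t = 0) \<and>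
     (\<forall>i\<in>{1..N}. \<forall>t\<in>{1..T}. 0 \<le> x i t \<and> x i t \<le> 1)"

definition ip_feasible ::
  "nat \<Rightarrow> nat \<Rightarrow> (nat \<Rightarrow> real) \<Rightarrow> (nat \<Rightarrow> real) \<Rightarrow> (nat \<Rightarrow> nat \<Rightarrow> real) \<Rightarrow> bool" where
  "ip_feasible N T w B x \<longleftrightarrow>
     lp_feasible N T w B x \<and> (\<forall>i\<in>{1..N}. \<forall>t\<in>{1..T}. x i t \<in> {0, 1})"

definition iik_obj ::
  "nat \<Rightarrow> nat \<Rightarrow> (nat \<Rightarrow> real) \<Rightarrow> (nat \<Rightarrow> nat \<Rightarrow> real) \<Rightarrow> real" where
  "iik_obj N T v x = (\<Sum>t=1..T. \<Sum>i=1..N. v i * x i t)"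

definition lp_opt ::
  "nat \<Rightarrow> nat \<Rightarrow> (nat \<Rightarrow> real) \<Rightarrow> (nat \<Rightarrow> real) \<Rightarrow> (nat \<Rightarrow> real) \<Rightarrow> real" where
  "lp_opt N T v w B = Sup (iik_obj N T v ` {x. lp_feasible N T w B x})"

definition ip_opt ::
  "nat \<Rightarrow> nat \<Rightarrow> (nat \<Rightarrow> real) \<Rightarrow> (nat \<Rightarrow> real) \<Rightarrow> (nat \<Rightarrow> real) \<Rightarrow> real" where
  "ip_opt N T v w B = Sup (iik_obj N T v ` {x. ip_feasible N T w B x})"

end

theory Submission
  imports Defs
begin

definition blk :: "nat \<Rightarrow> nat \<Rightarrow> nat list" where
  "blk n K = concat (map (\<lambda>b. replicate (K^(n-b)) b) [1..<Suc n])"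

lemma sorted_blocks: "sorted xs \<Longrightarrow> sorted (concat (map (\<lambda>b. replicate (c b) b) xs))"
  by (induction xs) (auto simp: sorted_append)

lemma blk_sorted: "sorted (blk n K)"
  unfolding blk_def by (rule sorted_blocks) (rule sorted_upt)

lemma blk_set: "set (blk n K) \<subseteq> {1..n}"
  unfolding blk_def by auto

lemma sum_nth_list: "(\<Sum>t=1..length L. (f (L!(t-1)) :: real)) = sum_list (map f L)"
proof -
  have "(\<Sum>t=1..length L. f (L!(t-1))) = (\<Sum>t<length L. f (L!t))"
    using sum.atLeast1_atMost_eq[of "\<lambda>t. f (L!(t-1))" "length L"] by simp
  then show ?thesis by (simp add: sum_list_sum_nth atLeast0LessThan)
qed

lemma sum_list_concat': "sum_list (concat xss) = sum_list (map sum_list (xss :: real list list))"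
  by (induction xss) auto

lemma blk_sum: "sum_list (map f (blk n K)) = (\<Sum>b=1..n. real (K^(n-b)) * (f b :: real))"
proof -
  have "sum_list (map f (blk n K)) = sum_list (map (\<lambda>b. real (K^(n-b)) * f b) [1..<Suc n])"
    unfolding blk_def by (simp add: map_concat sum_list_concat' comp_def sum_list_replicate)
  also have "\<dots> = (\<Sum>b=1..n. real (K^(n-b)) * f b)"
    by (simp only: sum_set_upt_conv_sum_list_nat[symmetric] set_upt atLeastLessThanSuc_atLeastAtMost)
  finally show ?thesis .
qed

definition beta :: "nat \<Rightarrow> nat \<Rightarrow> nat \<Rightarrow> nat" where
  "beta n K t = blk n K ! (t - 1)"

lemma beta_range: "t \<in> {1..length (blk n K)} \<Longrightarrow> beta n K t \<in> {1..n}"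
proof -
  assume "t \<in> {1..length (blk n K)}"
  then have "blk n K ! (t-1) \<in> set (blk n K)" by (intro nth_mem) auto
  then show ?thesis using blk_set[of n K] unfolding beta_def by blast
qed

lemma beta_mono: "1 \<le> t \<Longrightarrow> t \<le> t' \<Longrightarrow> t' \<le> length (blk n K) \<Longrightarrow> beta n K t \<le> beta n K t'"
  unfolding beta_def by (rule sorted_nth_mono[OF blk_sorted]) auto

lemma x_mono:
  assumes "lp_feasible N T w B x" "i \<in> {1..N}" "1 \<le> t" "t \<le> t'" "t' \<le> T"
  shows "x i t \<le> x i t'"
  using assms(4,5)
proof (induction t' rule: dec_induct)
  case base then show ?case by simp
next
  case (step m)
  then have "Suc m \<in> {2..T}" using assms(3) by auto
  then have "x i (Suc m - 1) \<le> x i (Suc m)" using assms(1,2) unfolding lp_feasible_def by blast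
  then have "x i m \<le> x i (Suc m)" by simp
  then show ?case using step by simp
qed

lemma sum_2pow: "(\<Sum>i=1..b. (2::real)^i) = 2^(Suc b) - 2"
  by (induction b) auto

definition x0 :: "nat \<Rightarrow> nat \<Rightarrow> nat \<Rightarrow> nat \<Rightarrow> real" where
  "x0 n K i t = (if i \<le> beta n K t then 1/2 else 0)"

lemma x0_feasible:
  "lp_feasible n (length (blk n K)) (\<lambda>i. 2^i) (\<lambda>t. 2^(beta n K t)) (x0 n K)"
  unfolding lp_feasible_def
proof (intro conjI ballI impI)
  fix t assume t: "t \<in> {1..length (blk n K)}"
  define b where "b = beta n K t"
  have bn: "b \<le> n" using beta_range[OF t] b_def by auto
  have "(\<Sum>i=1..n. (2::real)^i * x0 n K i t) = (\<Sum>i\<in>{1..n} \<inter> {i. i \<le> b}. (2::real)^i / 2)"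
    unfolding sum.inter_restrict[OF finite_atLeastAtMost] x0_def b_def
    by (rule sum.cong) auto
  also have "{1..n} \<inter> {i. i \<le> b} = {1..b}" using bn by auto
  also have "(\<Sum>i\<in>{1..b}. (2::real)^i / 2) = (2^(Suc b) - 2) / 2"
    using sum_2pow[of b] by (simp add: sum_divide_distrib[symmetric])
  also have "\<dots> \<le> 2^b" by simp
  finally show "(\<Sum>i=1..n. (2::real)^i * x0 n K i t) \<le> 2^(beta n K t)" using b_def by simp
next
  fix i t assume i: "i \<in> {1..n}" and t: "t \<in> {2..length (blk n K)}"
  then have "beta n K (t-1) \<le> beta n K t" by (intro beta_mono) auto
  then show "x0 n K i (t - 1) \<le> x0 n K i t" unfolding x0_def by auto
next
  fix i t assume "(2::real)^i > 2^(beta n K t)"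
  then have "\<not> i \<le> beta n K t"
    by (metis linorder_not_le one_less_numeral_iff power_strict_increasing_iff semiring_norm(76)
        leD power_increasing one_le_numeral)
  then show "x0 n K i t = 0" unfolding x0_def by simp
qed (auto simp: x0_def)

lemma x0_obj:
  assumes "K \<ge> 1"
  shows "iik_obj n (length (blk n K)) (\<lambda>i. real K ^ i) (x0 n K) \<ge> real n * real K ^ n / 2"
proof -
  have "(\<Sum>t=1..length (blk n K). real K ^ beta n K t / 2) \<le> iik_obj n (length (blk n K)) (\<lambda>i. real K ^ i) (x0 n K)"
    unfolding iik_obj_def
  proof (rule sum_mono)
    fix t assume t: "t \<in> {1..length (blk n K)}"
    have "real K ^ beta n K t / 2 = real K ^ beta n K t * x0 n K (beta n K t) t"
      unfolding x0_def by simp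
    also have "\<dots> \<le> (\<Sum>i=1..n. real K ^ i * x0 n K i t)"
      by (rule member_le_sum[where f="\<lambda>i. real K ^ i * x0 n K i t"]) (use beta_range[OF t] in \<open>auto simp: x0_def\<close>)
    finally show "real K ^ beta n K t / 2 \<le> (\<Sum>i=1..n. real K ^ i * x0 n K i t)" .
  qed
  moreover have "(\<Sum>t=1..length (blk n K). real K ^ beta n K t / 2) = real n * real K ^ n / 2"
  proof -
    have "(\<Sum>t=1..length (blk n K). real K ^ beta n K t / 2) = (\<Sum>b=1..n. real (K^(n-b)) * (real K ^ b / 2))"
      unfolding beta_def using sum_nth_list[where L="blk n K" and f="\<lambda>b. real K ^ b / 2"] blk_sum by simp
    also have "\<dots> = (\<Sum>b=1..n. real K ^ n / 2)"
      by (rule sum.cong) (auto simp: power_add[symmetric])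
    finally show ?thesis by simp
  qed
  ultimately show ?thesis by simp
qed

lemma ip_only_one:
  assumes x: "ip_feasible n (length (blk n K)) (\<lambda>i. 2^i) (\<lambda>t. 2^(beta n K t)) x"
    and t: "t \<in> {1..length (blk n K)}" and xb: "x (beta n K t) t = 1"
    and i: "i \<in> {1..n}" and ib: "i \<noteq> beta n K t"
  shows "x i t = 0"
proof -
  define b where "b = beta n K t"
  have b: "b \<in> {1..n}" using beta_range[OF t] b_def by simp
  have lp: "lp_feasible n (length (blk n K)) (\<lambda>i. 2^i) (\<lambda>t. 2^(beta n K t)) x"
    using x unfolding ip_feasible_def by simp
  have nn: "\<And>j. j \<in> {1..n} \<Longrightarrow> 0 \<le> x j t" using lp t unfolding lp_feasible_def by blast
  have cap: "(\<Sum>j=1..n. (2::real)^j * x j t) \<le> 2^b" using lp t b_def unfolding lp_feasible_def by blast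
  have x01: "x i t \<in> {0,1}" using x i t unfolding ip_feasible_def by blast
  show ?thesis
  proof (cases "i < b")
    case True
    show ?thesis
    proof (rule ccontr)
      assume "x i t \<noteq> 0"
      then have xi: "x i t = 1" using x01 by auto
      have "(\<Sum>j\<in>{i,b}. (2::real)^j * x j t) \<le> (\<Sum>j=1..n. (2::real)^j * x j t)"
        by (rule sum_mono2) (use i b nn in auto)
      moreover have "(\<Sum>j\<in>{i,b}. (2::real)^j * x j t) = 2^i + 2^b"
        using True xi xb b_def by simp
      ultimately show False using cap by (smt (verit) zero_less_power)
    qed
  next
    case False
    then have "i > b" using ib b_def by simp
    then have "(2::real)^i > 2^b" by (simp add: power_strict_increasing)
    then show ?thesis using lp t i b_def unfolding lp_feasible_def by blast
  qed
qed

lemma ip_same_block: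
  assumes x: "ip_feasible n (length (blk n K)) (\<lambda>i. 2^i) (\<lambda>t. 2^(beta n K t)) x"
    and s: "s \<in> {1..length (blk n K)}" and t: "t \<in> {1..length (blk n K)}" and st: "s \<le> t"
    and xs: "x (beta n K s) s = 1" and xt: "x (beta n K t) t = 1"
  shows "beta n K s = beta n K t"
proof (rule ccontr)
  assume ne: "beta n K s \<noteq> beta n K t"
  have lp: "lp_feasible n (length (blk n K)) (\<lambda>i. 2^i) (\<lambda>t. 2^(beta n K t)) x"
    using x unfolding ip_feasible_def by simp
  have bs: "beta n K s \<in> {1..n}" using beta_range[OF s] .
  have "x (beta n K s) s \<le> x (beta n K s) t"
    by (rule x_mono[OF lp bs]) (use s t st in auto)
  then have "x (beta n K s) t \<noteq> 0" using xs by auto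
  moreover have "x (beta n K s) t = 0"
    by (rule ip_only_one[OF x t xt bs ne])
  ultimately show False by simp
qed

lemma ip_val_bound:
  assumes x: "ip_feasible n (length (blk n K)) (\<lambda>i. 2^i) (\<lambda>t. 2^(beta n K t)) x"
    and t: "t \<in> {1..length (blk n K)}" and K: "K = n * n" and n: "n \<ge> 1"
  shows "(\<Sum>i=1..n. real K ^ i * x i t) \<le>
     (if x (beta n K t) t = 1 then real K ^ beta n K t else 0) + real K ^ beta n K t / real n"
proof -
  define b where "b = beta n K t"
  have b: "b \<in> {1..n}" using beta_range[OF t] b_def by simp
  have lp: "lp_feasible n (length (blk n K)) (\<lambda>i. 2^i) (\<lambda>t. 2^(beta n K t)) x"
    using x unfolding ip_feasible_def by simp
  have "K \<ge> 1" using K n by (simp add: one_le_mult_iff)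
  then have K1: "real K \<ge> 1" by simp
  show ?thesis
  proof (cases "x b t = 1")
    case True
    have "(\<Sum>i=1..n. real K ^ i * x i t) = (\<Sum>i=1..n. if i = b then real K ^ b else 0)"
    proof (rule sum.cong)
      fix i assume i: "i \<in> {1..n}"
      show "real K ^ i * x i t = (if i = b then real K ^ b else 0)"
        using ip_only_one[OF x t _ i] True b_def by auto
    qed simp
    also have "\<dots> = real K ^ b" using b by simp
    finally show ?thesis using True b_def by simp
  next
    case False
    have "(\<Sum>i=1..n. real K ^ i * x i t) \<le> (\<Sum>i=1..n. real K ^ (b - 1))"
    proof (rule sum_mono)
      fix i assume i: "i \<in> {1..n}"
      have x01: "x i t \<in> {0,1}" using x i t unfolding ip_feasible_def by blast
      show "real K ^ i * x i t \<le> real K ^ (b - 1)"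
      proof (cases "i < b")
        case True
        have "real K ^ i * x i t \<le> real K ^ i" using x01 by auto
        also have "\<dots> \<le> real K ^ (b - 1)" by (rule power_increasing) (use True K1 in auto)
        finally show ?thesis .
      next
        case ge: False
        have "x i t = 0"
        proof (cases "i = b")
          case True then show ?thesis using False x01 by auto
        next
          case ne: False
          then have "i > b" using ge by simp
          then have "(2::real)^i > 2^b" by (simp add: power_strict_increasing)
          then show ?thesis using lp t i b_def unfolding lp_feasible_def by blast
        qed
        then show ?thesis by simp
      qed
    qed
    also have "\<dots> = real n * real K ^ (b - 1)" by simp
    also have "\<dots> = real K ^ b / real n"
    proof -
      have "real K ^ b = real K * real K ^ (b - 1)" using b by (simp add: power_eq_if)
      then show ?thesis using K n by (simp add: field_simps)
    qed
    finally show ?thesis using False b_def by simp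
  qed
qed

lemma ip_bound:
  assumes x: "ip_feasible n (length (blk n K)) (\<lambda>i. 2^i) (\<lambda>t. 2^(beta n K t)) x"
    and K: "K = n * n" and n: "n \<ge> 1"
  shows "iik_obj n (length (blk n K)) (\<lambda>i. real K ^ i) x \<le> 2 * real K ^ n"
proof -
  let ?T = "length (blk n K)"
  let ?H = "\<lambda>t. if x (beta n K t) t = 1 then real K ^ beta n K t else 0"
  have blocksum: "(\<Sum>t=1..?T. f (beta n K t)) = (\<Sum>b=1..n. real (K^(n-b)) * f b)" for f
    unfolding beta_def using sum_nth_list[where L="blk n K" and f=f] blk_sum by simp
  have "iik_obj n ?T (\<lambda>i. real K ^ i) x \<le> (\<Sum>t=1..?T. ?H t + real K ^ beta n K t / real n)"
    unfolding iik_obj_def by (rule sum_mono) (rule ip_val_bound[OF x _ K n])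
  also have "\<dots> = (\<Sum>t=1..?T. ?H t) + (\<Sum>t=1..?T. real K ^ beta n K t / real n)"
    by (simp add: sum.distrib)
  also have "(\<Sum>t=1..?T. real K ^ beta n K t / real n) = real K ^ n"
  proof -
    have "(\<Sum>t=1..?T. real K ^ beta n K t / real n) = (\<Sum>b=1..n. real (K^(n-b)) * (real K ^ b / real n))"
      by (rule blocksum)
    also have "\<dots> = (\<Sum>b=1..n. real K ^ n / real n)"
      by (rule sum.cong) (auto simp: power_add[symmetric])
    finally show ?thesis using n by simp
  qed
  also have "(\<Sum>t=1..?T. ?H t) \<le> real K ^ n"
  proof (cases "\<exists>t0\<in>{1..?T}. x (beta n K t0) t0 = 1")
    case False
    then have "(\<Sum>t=1..?T. ?H t) = 0" by (intro sum.neutral) auto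
    then show ?thesis by simp
  next
    case True
    then obtain t0 where t0: "t0 \<in> {1..?T}" "x (beta n K t0) t0 = 1" by blast
    define k where "k = beta n K t0"
    have k: "k \<in> {1..n}" using beta_range[OF t0(1)] k_def by simp
    have "(\<Sum>t=1..?T. ?H t) \<le> (\<Sum>t=1..?T. if beta n K t = k then real K ^ beta n K t else 0)"
    proof (rule sum_mono)
      fix t assume t: "t \<in> {1..?T}"
      show "?H t \<le> (if beta n K t = k then real K ^ beta n K t else 0)"
      proof (cases "x (beta n K t) t = 1")
        case True
        have "beta n K t = k"
        proof (cases "t0 \<le> t")
          case True': True
          then show ?thesis using ip_same_block[OF x t0(1) t True' t0(2)] \<open>x (beta n K t) t = 1\<close> k_def by simp
        next
          case False
          then show ?thesis using ip_same_block[OF x t t0(1) _ \<open>x (beta n K t) t = 1\<close> t0(2)] k_def by simp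
        qed
        then show ?thesis using True by simp
      qed simp
    qed
    also have "\<dots> = (\<Sum>b=1..n. real (K^(n-b)) * (if b = k then real K ^ b else 0))"
      by (rule blocksum)
    also have "\<dots> = real (K^(n-k)) * real K ^ k" using k by (simp add: if_distrib cong: if_cong)
    also have "\<dots> = real K ^ n" using k by (simp add: power_add[symmetric])
    finally show ?thesis .
  qed
  finally show ?thesis by simp
qed

theorem theorem1:
  fixes C :: real
  assumes "C > 0"
  shows "\<exists>N T v w B. iik_instance N T v w B \<and> lp_opt N T v w B > C * ip_opt N T v w B"
proof -
  define n where "n = nat \<lceil>4 * C\<rceil> + 1"
  have n1: "n \<ge> 1" unfolding n_def by simp
  have nC: "real n > 4 * C" unfolding n_def using assms by linarith
  define K where "K = n * n"
  have K1: "K \<ge> 1" using n1 unfolding K_def by (simp add: one_le_mult_iff)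
  define T where "T = length (blk n K)"
  define v where "v = (\<lambda>i. real K ^ i)"
  define w where "w = (\<lambda>i::nat. (2::real) ^ i)"
  define B where "B = (\<lambda>t. (2::real) ^ beta n K t)"
  have inst: "iik_instance n T v w B"
    unfolding iik_instance_def v_def w_def B_def
  proof (intro conjI ballI)
    fix t assume "t \<in> {2..T}"
    then have "beta n K (t-1) \<le> beta n K t" unfolding T_def by (intro beta_mono) auto
    then show "(2::real) ^ beta n K (t - 1) \<le> 2 ^ beta n K t" by (simp add: power_increasing)
  qed (use K1 in auto)
  have bdd: "bdd_above (iik_obj n T v ` {x. lp_feasible n T w B x})"
  proof (rule bdd_aboveI[where M="\<Sum>t=1..T. \<Sum>i=1..n. v i"])
    fix y assume "y \<in> iik_obj n T v ` {x. lp_feasible n T w B x}"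
    then obtain x where x: "lp_feasible n T w B x" and y: "y = iik_obj n T v x" by auto
    show "y \<le> (\<Sum>t=1..T. \<Sum>i=1..n. v i)"
      unfolding y iik_obj_def
    proof (intro sum_mono)
      fix t i assume "t \<in> {1..T}" "i \<in> {1..n}"
      then have "x i t \<le> 1" using x unfolding lp_feasible_def by blast
      moreover have "v i \<ge> 0" unfolding v_def by simp
      ultimately show "v i * x i t \<le> v i" by (simp add: mult_left_le)
    qed
  qed
  have "lp_opt n T v w B \<ge> real n * real K ^ n / 2"
  proof -
    have "lp_feasible n T w B (x0 n K)" unfolding T_def w_def B_def by (rule x0_feasible)
    then have "iik_obj n T v (x0 n K) \<le> lp_opt n T v w B"
      unfolding lp_opt_def by (intro cSup_upper bdd) auto
    moreover have "iik_obj n T v (x0 n K) \<ge> real n * real K ^ n / 2"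
      unfolding T_def v_def using x0_obj[OF K1] by simp
    ultimately show ?thesis by simp
  qed
  moreover have "ip_opt n T v w B \<le> 2 * real K ^ n"
    unfolding ip_opt_def
  proof (rule cSup_least)
    have "ip_feasible n T w B (\<lambda>i t. 0)"
      unfolding ip_feasible_def lp_feasible_def B_def by auto
    then show "iik_obj n T v ` {x. ip_feasible n T w B x} \<noteq> {}" by auto
  next
    fix y assume "y \<in> iik_obj n T v ` {x. ip_feasible n T w B x}"
    then obtain x where x: "ip_feasible n T w B x" and y: "y = iik_obj n T v x" by auto
    show "y \<le> 2 * real K ^ n" unfolding y T_def v_def
      by (rule ip_bound[OF _ K_def n1]) (use x in \<open>simp add: T_def w_def B_def\<close>)
  qed
  moreover have "C * (2 * real K ^ n) < real n * real K ^ n / 2"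
  proof -
    have pos: "real K ^ n > 0" using K1 by simp
    have "C * (2 * real K ^ n) = (4 * C) * real K ^ n / 2" by simp
    also have "\<dots> < real n * real K ^ n / 2" using nC pos by simp
    finally show ?thesis .
  qed
  ultimately have "lp_opt n T v w B > C * ip_opt n T v w B"
    using assms by (smt (verit) mult_left_mono)
  then show ?thesis using inst by blast
qed

end
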